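(* Let $\mathcal{H}$ be a hereditary $\sigma$-ring of sets, let $\mu^*$ be an outer measure on $\mathcal{H}$, let $X$ be a set with $X\cap\bigcup\mathcal{H}\neq\emptyset$, and let $\overline{\overline{S}}$ be the class of all $\mu^{**}$-measurable sets. Then $\overline{\overline{S}}$ is a ring of sets, i.e. $L\cup M\in\overline{\overline{S}}$ and $M-L\in\overline{\overline{S}}$ whenever $L,M\in\overline{\overline{S}}$.
   Context: A nonempty class $\mathcal{E}$ of sets is hereditary if $F\in\mathcal{E}$ whenever $E\in\mathcal{E}$ and $F\subseteq E$. A set $E\in\mathcal{H}$ is $\mu^*$-measurable if $\mu^*(A)=\mu^*(A\cap E)+\mu^*(A\cap E')$ for every $A\in\mathcal{H}$, where $E'$ denotes the complement of $E$. Let $\overline{S}$ denote the class of all $\mu^*$-measurable sets. Let $K=\{B\subseteq X: B\cap E\in\mathcal{H}\text{ for all }E\in\mathcal{H}\}$. A set $Q\in K$ is called $\mu^{**}$-measurable if $Q\cap E$ is $\mu^*$-measurable for every $\mu^*$-measurable $E\in\mathcal{H}$, i.e. for all $A\in\mathcal{H}$ and all $E\in\overline{S}$, $\mu^*(A)=\mu^*[A\cap(Q\cap E)]+\mu^*[A\cap(Q\cap E)']$. *)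

theory Defs
  imports "HOL-Library.Extended_Nonnegative_Real"
begin

definition hereditary :: "'a set set \<Rightarrow> bool" where
  "hereditary H \<longleftrightarrow> H \<noteq> {} \<and> (\<forall>E\<in>H. \<forall>F. F \<subseteq> E \<longrightarrow> F \<in> H)"

definition sigma_ring_of_sets :: "'a set set \<Rightarrow> bool" where
  "sigma_ring_of_sets H \<longleftrightarrow> H \<noteq> {} \<and>
     (\<forall>E\<in>H. \<forall>F\<in>H. E - F \<in> H) \<and>
     (\<forall>A :: nat \<Rightarrow> 'a set. range A \<subseteq> H \<longrightarrow> (\<Union>i. A i) \<in> H)"

definition outer_measure_on :: "'a set set \<Rightarrow> ('a set \<Rightarrow> ennreal) \<Rightarrow> bool" where
  "outer_measure_on H \<mu> \<longleftrightarrow> \<mu> {} = 0 \<and>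
     (\<forall>E\<in>H. \<forall>F\<in>H. E \<subseteq> F \<longrightarrow> \<mu> E \<le> \<mu> F) \<and>
     (\<forall>A :: nat \<Rightarrow> 'a set. range A \<subseteq> H \<longrightarrow> (\<Union>i. A i) \<in> H \<longrightarrow>
        \<mu> (\<Union>i. A i) \<le> (\<Sum>i. \<mu> (A i)))"

definition mu_measurable :: "'a set set \<Rightarrow> ('a set \<Rightarrow> ennreal) \<Rightarrow> 'a set set" where
  "mu_measurable H \<mu> = {E \<in> H. \<forall>A\<in>H. \<mu> A = \<mu> (A \<inter> E) + \<mu> (A \<inter> - E)}"

definition K_class :: "'a set set \<Rightarrow> 'a set \<Rightarrow> 'a set set" where
  "K_class H X = {B. B \<subseteq> X \<and> (\<forall>E\<in>H. B \<inter> E \<in> H)}"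

definition mu2_measurable :: "'a set set \<Rightarrow> ('a set \<Rightarrow> ennreal) \<Rightarrow> 'a set \<Rightarrow> 'a set set" where
  "mu2_measurable H \<mu> X = {Q \<in> K_class H X. \<forall>A\<in>H. \<forall>E\<in>mu_measurable H \<mu>.
      \<mu> A = \<mu> (A \<inter> (Q \<inter> E)) + \<mu> (A \<inter> - (Q \<inter> E))}"

end

theory Submission
  imports Defs
begin

definition cara :: "'a set set \<Rightarrow> ('a set \<Rightarrow> ennreal) \<Rightarrow> 'a set \<Rightarrow> bool" where
  "cara H \<mu> E \<longleftrightarrow> (\<forall>A\<in>H. \<mu> A = \<mu> (A \<inter> E) + \<mu> (A \<inter> - E))"

lemma her_sub: "hereditary H \<Longrightarrow> A \<in> H \<Longrightarrow> B \<subseteq> A \<Longrightarrow> B \<in> H"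
  unfolding hereditary_def by blast

lemma cara_un:
  assumes h: "hereditary H" and e: "cara H \<mu> E" and f: "cara H \<mu> F"
  shows "cara H \<mu> (E \<union> F)"
  unfolding cara_def
proof
  fix A assume A: "A \<in> H"
  have A1: "A \<inter> (E \<union> F) \<in> H" "A \<inter> - E \<in> H" using her_sub[OF h A] by auto
  have 1: "\<mu> A = \<mu> (A \<inter> E) + \<mu> (A \<inter> - E)" using e A unfolding cara_def by blast
  have 2: "\<mu> (A \<inter> - E) = \<mu> (A \<inter> - E \<inter> F) + \<mu> (A \<inter> - E \<inter> - F)"
    using f A1(2) unfolding cara_def by blast
  have 3: "\<mu> (A \<inter> (E \<union> F)) = \<mu> (A \<inter> (E \<union> F) \<inter> E) + \<mu> (A \<inter> (E \<union> F) \<inter> - E)"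
    using e A1(1) unfolding cara_def by blast
  have s: "A \<inter> (E \<union> F) \<inter> E = A \<inter> E" "A \<inter> (E \<union> F) \<inter> - E = A \<inter> - E \<inter> F"
    "A \<inter> - E \<inter> - F = A \<inter> - (E \<union> F)" by auto
  show "\<mu> A = \<mu> (A \<inter> (E \<union> F)) + \<mu> (A \<inter> - (E \<union> F))"
    using 1 2 3 s by (simp add: ac_simps)
qed

lemma cara_diff:
  assumes h: "hereditary H" and e: "cara H \<mu> E" and f: "cara H \<mu> F"
  shows "cara H \<mu> (F - E)"
  unfolding cara_def
proof
  fix A assume A: "A \<in> H"
  have A1: "A \<inter> - (F - E) \<in> H" "A \<inter> - E \<in> H" using her_sub[OF h A] by auto
  have 1: "\<mu> A = \<mu> (A \<inter> E) + \<mu> (A \<inter> - E)" using e A unfolding cara_def by blast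
  have 2: "\<mu> (A \<inter> - E) = \<mu> (A \<inter> - E \<inter> F) + \<mu> (A \<inter> - E \<inter> - F)"
    using f A1(2) unfolding cara_def by blast
  have 3: "\<mu> (A \<inter> - (F - E)) = \<mu> (A \<inter> - (F - E) \<inter> E) + \<mu> (A \<inter> - (F - E) \<inter> - E)"
    using e A1(1) unfolding cara_def by blast
  have s: "A \<inter> - (F - E) \<inter> E = A \<inter> E" "A \<inter> - (F - E) \<inter> - E = A \<inter> - E \<inter> - F"
    "A \<inter> - E \<inter> F = A \<inter> (F - E)" by auto
  show "\<mu> A = \<mu> (A \<inter> (F - E)) + \<mu> (A \<inter> - (F - E))"
    using 1 2 3 s by (simp add: ac_simps)
qed

lemma ring_un:
  assumes "sigma_ring_of_sets H" "P \<in> H" "Q \<in> H"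
  shows "P \<union> Q \<in> H"
proof -
  let ?A = "\<lambda>i::nat. if i = 0 then P else Q"
  have "range ?A \<subseteq> H" using assms by auto
  hence "(\<Union>i. ?A i) \<in> H" using assms(1) unfolding sigma_ring_of_sets_def by blast
  moreover have "(\<Union>i. ?A i) = P \<union> Q"
    by (auto split: if_splits)
  ultimately show ?thesis by simp
qed

lemma mu2_iff: "Q \<in> mu2_measurable H \<mu> X \<longleftrightarrow> Q \<in> K_class H X \<and>
   (\<forall>E\<in>mu_measurable H \<mu>. cara H \<mu> (Q \<inter> E))"
  unfolding mu2_measurable_def cara_def by blast

theorem theorem3p1:
  fixes H :: "'a set set" and \<mu> :: "'a set \<Rightarrow> ennreal" and X :: "'a set"
  assumes "hereditary H" and "sigma_ring_of_sets H"
    and "outer_measure_on H \<mu>"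
    and "X \<inter> \<Union>H \<noteq> {}"
    and "L \<in> mu2_measurable H \<mu> X" and "M \<in> mu2_measurable H \<mu> X"
  shows "L \<union> M \<in> mu2_measurable H \<mu> X \<and> M - L \<in> mu2_measurable H \<mu> X"
proof -
  have L: "L \<subseteq> X" "\<And>E. E \<in> H \<Longrightarrow> L \<inter> E \<in> H"
    "\<And>E. E \<in> mu_measurable H \<mu> \<Longrightarrow> cara H \<mu> (L \<inter> E)"
    using assms(5) unfolding mu2_iff K_class_def by auto
  have M: "M \<subseteq> X" "\<And>E. E \<in> H \<Longrightarrow> M \<inter> E \<in> H"
    "\<And>E. E \<in> mu_measurable H \<mu> \<Longrightarrow> cara H \<mu> (M \<inter> E)"
    using assms(6) unfolding mu2_iff K_class_def by auto
  have "L \<union> M \<in> K_class H X"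
    unfolding K_class_def using L M ring_un[OF assms(2)]
    by (auto simp: Int_Un_distrib2)
  moreover have "M - L \<in> K_class H X"
    unfolding K_class_def using M(1,2) her_sub[OF assms(1)] by blast
  moreover have "cara H \<mu> ((L \<union> M) \<inter> E)" if "E \<in> mu_measurable H \<mu>" for E
    using cara_un[OF assms(1) L(3)[OF that] M(3)[OF that]] by (simp add: Int_Un_distrib2)
  moreover have "cara H \<mu> ((M - L) \<inter> E)" if "E \<in> mu_measurable H \<mu>" for E
  proof -
    have "(M - L) \<inter> E = M \<inter> E - L \<inter> E" by auto
    thus ?thesis using cara_diff[OF assms(1) L(3)[OF that] M(3)[OF that]] by simp
  qed
  ultimately show ?thesis unfolding mu2_iff by blast
qed

end
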